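(* Let $\Omega,\widetilde\Omega$ be Polish spaces and $\mathcal{P}:\Omega\twoheadrightarrow\mathfrak{P}(\widetilde\Omega)$ a non-empty-valued random set whose graph $\{(\omega,P):P\in\mathcal{P}(\omega)\}$ is analytic. Let $X:\Omega\times\widetilde\Omega\to\mathbb{R}^d$ be Borel-measurable with $\mathrm{supp}_{\mathcal{P}}X(\omega)\neq\emptyset$ for all $\omega\in\Omega$. Fix $\omega\in\Omega$ and let $h:\Omega\times\mathbb{R}^d\to\mathbb{R}$ be upper semi-analytic and such that $h(\omega,\cdot)$ is lower semi-continuous. Then $$\mathrm{ess\,sup}_{\mathcal{P}}\,h(X)(\omega)=\sup_{x\in\mathrm{supp}_{\mathcal{P}}X(\omega)}h(\omega,x),$$ where $h(X)(\omega,\widetilde\omega):=h(\omega,X(\omega,\widetilde\omega))$.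
   Context: $\mathfrak{P}(\widetilde\Omega)$ is the set of Borel probability measures on $\widetilde\Omega$ with the weak topology. A property holds $\mathcal{P}(\omega)$-q.s. if it holds outside a set contained in a Borel set that is null for every $P\in\mathcal{P}(\omega)$. $\mathrm{supp}_{\mathcal{P}}X(\omega):=\bigcap\{F\subset\mathbb{R}^d\text{ closed}:\ P(X(\omega,\cdot)\in F)=1\ \forall P\in\mathcal{P}(\omega)\}$. A function is upper semi-analytic if its strict upper level sets $\{h>c\}$ are analytic. For $Z:\Omega\times\widetilde\Omega\to\mathbb{R}$, $\mathrm{ess\,sup}_{\mathcal{P}}Z(\omega)\in[-\infty,+\infty]$ denotes the quasi-sure essential supremum: the value such that, for all $y\in\mathbb{R}$, $y\ge Z(\omega,\cdot)$ $\mathcal{P}(\omega)$-q.s. if and only if $y\ge \mathrm{ess\,sup}_{\mathcal{P}}Z(\omega)$ (and $\mathrm{ess\,sup}_{\mathcal{P}}Z(\omega)\ge Z(\omega,\cdot)$ $\mathcal{P}(\omega)$-q.s.). *)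

theory Defs
  imports "HOL-Analysis.Analysis" "HOL-Probability.Probability"
begin

text \<open>Analytic sets: the empty set or a continuous image of the Baire space
  (nat => nat with the product topology of discrete nat).\<close>
definition analytic_in :: "'x topology \<Rightarrow> 'x set \<Rightarrow> bool" where
  "analytic_in T A \<longleftrightarrow> A \<subseteq> topspace T \<and>
     (A = {} \<or> (\<exists>f :: (nat \<Rightarrow> nat) \<Rightarrow> 'x. continuous_map euclidean T f \<and> range f = A))"

definition upper_semianalytic :: "('x::topological_space \<Rightarrow> real) \<Rightarrow> bool" where
  "upper_semianalytic h \<longleftrightarrow> (\<forall>c. analytic_in euclidean {z. c < h z})"

definition lower_semicont :: "('x::topological_space \<Rightarrow> real) \<Rightarrow> bool" where
  "lower_semicont f \<longleftrightarrow> (\<forall>c. open {x. c < f x})"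

definition probs :: "'b::topological_space measure set" where
  "probs = {P. prob_space P \<and> sets P = sets borel}"

definition weak_top :: "'b::topological_space measure topology" where
  "weak_top = subtopology
     (topology_generated_by
        {{P \<in> probs. (\<integral>w. f w \<partial>P) \<in> U} | (f :: 'b \<Rightarrow> real) U.
            continuous_on UNIV f \<and> bounded (range f) \<and> open U})
     probs"

definition qs_polar :: "'b::topological_space measure set \<Rightarrow> 'b set \<Rightarrow> bool" where
  "qs_polar Ps N \<longleftrightarrow> (\<exists>B \<in> sets borel. N \<subseteq> B \<and> (\<forall>P\<in>Ps. emeasure P B = 0))"

definition qs :: "'b::topological_space measure set \<Rightarrow> ('b \<Rightarrow> bool) \<Rightarrow> bool" where
  "qs Ps Q \<longleftrightarrow> qs_polar Ps {w. \<not> Q w}"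

definition qs_ess_sup :: "'b::topological_space measure set \<Rightarrow> ('b \<Rightarrow> real) \<Rightarrow> ereal" where
  "qs_ess_sup Ps Z = Inf {y :: ereal. qs Ps (\<lambda>w. ereal (Z w) \<le> y)}"

definition qs_supp :: "'b::topological_space measure set \<Rightarrow> ('b \<Rightarrow> 'c::topological_space) \<Rightarrow> 'c set" where
  "qs_supp Ps Y = \<Inter> {F. closed F \<and> (\<forall>P\<in>Ps. measure P {w. Y w \<in> F} = 1)}"

end

theory Submission
  imports Defs
begin

theorem proposition1:
  fixes \<P> :: "'a::polish_space \<Rightarrow> 'b::polish_space measure set"
    and X :: "'a \<times> 'b \<Rightarrow> (real ^ 'n)"
    and h :: "'a \<times> (real ^ 'n) \<Rightarrow> real"
    and \<omega> :: 'a
  assumes nonempty: "\<forall>\<omega>'. \<P> \<omega>' \<noteq> {} \<and> \<P> \<omega>' \<subseteq> probs"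
    and graph_analytic: "analytic_in (prod_topology euclidean weak_top) {(\<omega>', P). P \<in> \<P> \<omega>'}"
    and X_meas: "X \<in> borel_measurable borel"
    and supp_ne: "\<forall>\<omega>'. qs_supp (\<P> \<omega>') (\<lambda>w. X (\<omega>', w)) \<noteq> {}"
    and h_usa: "upper_semianalytic h"
    and h_lsc: "lower_semicont (\<lambda>x. h (\<omega>, x))"
  shows "qs_ess_sup (\<P> \<omega>) (\<lambda>w. h (\<omega>, X (\<omega>, w)))
           = (SUP x \<in> qs_supp (\<P> \<omega>) (\<lambda>w. X (\<omega>, w)). ereal (h (\<omega>, x)))"
proof -
  define Y where "Y = (\<lambda>w. X (\<omega>, w))"
  define Ps where "Ps = \<P> \<omega>"
  define g where "g = (\<lambda>x. h (\<omega>, x))"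
  have Ymeas: "Y \<in> borel_measurable borel"
    unfolding Y_def
    using measurable_comp[OF borel_measurable_continuous_onI[of "\<lambda>w::'b. (\<omega>,w)"] X_meas]
    by (simp add: o_def continuous_intros)
  have sp: "sets P = sets borel" "prob_space P" if "P \<in> Ps" for P
    using nonempty that unfolding Ps_def probs_def by auto
  have spc: "space P = UNIV" if "P \<in> Ps" for P
    using sets_eq_imp_space_eq[OF sp(1)[OF that]] by simp
  have YP: "Y \<in> borel_measurable P" if "P \<in> Ps" for P
    using Ymeas measurable_cong_sets[OF sp(1)[OF that, symmetric] refl] by blast
  have setsY: "{w. Y w \<in> A} \<in> sets P" if "P \<in> Ps" "A \<in> sets borel" for P A
    using measurable_sets[OF YP[OF that(1)] that(2)] spc[OF that(1)] by (simp add: vimage_def)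
  define \<F> where "\<F> = {F. closed F \<and> (\<forall>P\<in>Ps. measure P {w. Y w \<in> F} = 1)}"
  define S where "S = \<Inter>\<F>"
  have S_eq: "qs_supp Ps Y = S" unfolding S_def \<F>_def qs_supp_def by simp
  have nullF: "{w. Y w \<notin> F} \<in> null_sets P" if "F \<in> \<F>" "P \<in> Ps" for F P
  proof -
    interpret prob_space P using sp(2)[OF that(2)] .
    have m: "{w. Y w \<in> F} \<in> sets P" using setsY[OF that(2)] that(1) unfolding \<F>_def by auto
    have eq: "{w. Y w \<notin> F} = space P - {w. Y w \<in> F}" using spc[OF that(2)] by auto
    have "measure P {w. Y w \<notin> F} = 0"
      unfolding eq using prob_compl[OF m] that unfolding \<F>_def by auto
    moreover have "{w. Y w \<notin> F} \<in> sets P" unfolding eq using m by auto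
    ultimately show ?thesis by (simp add: null_sets_def emeasure_eq_measure)
  qed
  have key1: "{w. Y w \<notin> S} \<in> null_sets P" if P: "P \<in> Ps" for P
  proof -
    obtain \<G> where G: "\<G> \<subseteq> uminus ` \<F>" "countable \<G>" "\<Union>\<G> = \<Union>(uminus ` \<F>)"
      using Lindelof[of "uminus ` \<F>"] unfolding \<F>_def by auto
    have "{w. Y w \<notin> S} = (\<Union>G\<in>\<G>. {w. Y w \<in> G})"
      using G(3) unfolding S_def by blast
    moreover have "(\<Union>G\<in>\<G>. {w. Y w \<in> G}) \<in> null_sets P"
    proof (rule null_sets_UN'[OF G(2)])
      fix G assume "G \<in> \<G>"
      then obtain F where "F \<in> \<F>" "G = - F" using G(1) by auto
      then show "{w. Y w \<in> G} \<in> null_sets P" using nullF[OF _ P] by auto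
    qed
    ultimately show ?thesis by simp
  qed
  have closedS: "closed S" unfolding S_def \<F>_def by auto
  define M where "M = (SUP x \<in> S. ereal (g x))"
  have le: "qs_ess_sup Ps (\<lambda>w. g (Y w)) \<le> M"
    unfolding qs_ess_sup_def
  proof (rule Inf_lower, simp, unfold qs_def qs_polar_def, intro bexI[of _ "{w. Y w \<notin> S}"] conjI ballI)
    show "{w. \<not> ereal (g (Y w)) \<le> M} \<subseteq> {w. Y w \<notin> S}"
      unfolding M_def by (auto intro: SUP_upper)
    show "{w. Y w \<notin> S} \<in> sets borel"
      using measurable_sets[OF Ymeas, of "- S"] closedS by (auto simp: vimage_def)
    show "emeasure P {w. Y w \<notin> S} = 0" if "P \<in> Ps" for P using key1[OF that] by auto
  qed
  have ge: "M \<le> qs_ess_sup Ps (\<lambda>w. g (Y w))"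
    unfolding qs_ess_sup_def
  proof (rule Inf_greatest)
    fix y assume "y \<in> {y. qs Ps (\<lambda>w. ereal (g (Y w)) \<le> y)}"
    then obtain B where B: "B \<in> sets borel" "{w. \<not> ereal (g (Y w)) \<le> y} \<subseteq> B"
      "\<And>P. P \<in> Ps \<Longrightarrow> emeasure P B = 0"
      unfolding qs_def qs_polar_def by auto
    define U where "U = {z. y < ereal (g z)}"
    have openU: "open U"
    proof (cases y)
      case (real r) then show ?thesis using h_lsc unfolding U_def lower_semicont_def g_def by simp
    next
      case PInf then show ?thesis unfolding U_def by simp
    next
      case MInf then show ?thesis unfolding U_def by simp
    qed
    have "- U \<in> \<F>"
    proof -
      have "measure P {w. Y w \<in> - U} = 1" if P: "P \<in> Ps" for P
      proof -
        interpret prob_space P using sp(2)[OF P] .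
        have m: "{w. Y w \<in> U} \<in> sets P" using setsY[OF P] openU by auto
        have "{w. Y w \<in> U} \<subseteq> B" using B(2) unfolding U_def by auto
        then have "emeasure P {w. Y w \<in> U} = 0"
          using emeasure_mono[of "{w. Y w \<in> U}" B P] B(3)[OF P] B(1) sp(1)[OF P] by auto
        then have "measure P {w. Y w \<in> U} = 0" by (simp add: measure_def)
        moreover have "{w. Y w \<in> - U} = space P - {w. Y w \<in> U}" using spc[OF P] by auto
        ultimately show ?thesis using prob_compl[OF m] by simp
      qed
      then show ?thesis unfolding \<F>_def using openU by auto
    qed
    then have "S \<subseteq> - U" unfolding S_def by auto
    then show "M \<le> y" unfolding M_def U_def by (auto intro!: SUP_least simp: not_less)
  qed
  show ?thesis using le ge S_eq unfolding Y_def Ps_def g_def M_def by simp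
qed

end
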